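(* For every $d\ge 2$, $p_c^{\operatorname{face}}(d+1)\le p_c^{\operatorname{face}}(d)$.
   Context: For $m\ge2$, a face in $\mathbb{R}^m$ is an $(m-1)$-dimensional elementary cube, i.e. a product $I_1\times\cdots\times I_m$ of intervals $[l,l]$ or $[l,l+1]$ ($l\in\mathbb{Z}$) with exactly one degenerate factor. Two faces $Q,Q'$ are adjacent if $Q\cap Q'$ is an $(m-2)$-dimensional elementary cube. In face percolation on $\mathbb{R}^m$ with parameter $p$, each face is open independently with probability $p$ (product measure $P_p$). $C(Q)$ is the set of open faces connected to $Q$ by chains of successively adjacent open faces, $Q_0=[0,0]\times[0,1]^{m-1}$, $\theta^{\operatorname{face}}(p)=P_p(|C(Q_0)|=\infty)$, and $p_c^{\operatorname{face}}(m)=\inf\{p:\theta^{\operatorname{face}}(p)>0\}$. *)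

theory Defs
  imports "HOL-Probability.Probability"
begin

text \<open>Points of R^m are represented as functions nat => real vanishing at coordinates >= m.\<close>

type_synonym point = "nat \<Rightarrow> real"
type_synonym cube = "point set"

definition cube_of :: "nat \<Rightarrow> (nat \<Rightarrow> int) \<Rightarrow> nat set \<Rightarrow> cube" where
  "cube_of m l N = {x. (\<forall>j<m. real_of_int (l j) \<le> x j \<and>
                              x j \<le> real_of_int (l j) + (if j \<in> N then 1 else 0))
                        \<and> (\<forall>j\<ge>m. x j = 0)}"

definition elem_cube :: "nat \<Rightarrow> nat \<Rightarrow> cube \<Rightarrow> bool" where
  "elem_cube m k S \<longleftrightarrow> (\<exists>l N. N \<subseteq> {..<m} \<and> card N = k \<and> S = cube_of m l N)"

definition faces :: "nat \<Rightarrow> cube set" where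
  "faces m = {S. elem_cube m (m - 1) S}"

definition adjacent :: "nat \<Rightarrow> cube \<Rightarrow> cube \<Rightarrow> bool" where
  "adjacent m Q Q' \<longleftrightarrow> elem_cube m (m - 2) (Q \<inter> Q')"

definition Q0 :: "nat \<Rightarrow> cube" where
  "Q0 m = cube_of m (\<lambda>_. 0) {1..<m}"

text \<open>Product measure P_p on configurations omega : faces => bool (True = open).\<close>
definition face_perc :: "nat \<Rightarrow> real \<Rightarrow> (cube \<Rightarrow> bool) measure" where
  "face_perc m p = (\<Pi>\<^sub>M Q\<in>faces m. measure_pmf (bernoulli_pmf p))"

definition open_adj :: "nat \<Rightarrow> (cube \<Rightarrow> bool) \<Rightarrow> cube \<Rightarrow> cube \<Rightarrow> bool" where
  "open_adj m \<omega> Q Q' \<longleftrightarrow> Q \<in> faces m \<and> Q' \<in> faces m \<and> \<omega> Q \<and> \<omega> Q' \<and> adjacent m Q Q'"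

definition cluster :: "nat \<Rightarrow> (cube \<Rightarrow> bool) \<Rightarrow> cube \<Rightarrow> cube set" where
  "cluster m \<omega> Q = {Q'. Q \<in> faces m \<and> Q' \<in> faces m \<and> \<omega> Q \<and> \<omega> Q' \<and> (open_adj m \<omega>)\<^sup>*\<^sup>* Q Q'}"

definition theta_face :: "nat \<Rightarrow> real \<Rightarrow> real" where
  "theta_face m p = measure (face_perc m p)
     {\<omega> \<in> space (face_perc m p). infinite (cluster m \<omega> (Q0 m))}"

definition pc_face :: "nat \<Rightarrow> real" where
  "pc_face m = Inf {p. 0 \<le> p \<and> p \<le> 1 \<and> theta_face m p > 0}"

end

theory Submission
  imports Defs
begin


definition lift :: "nat \<Rightarrow> cube \<Rightarrow> cube" where
  "lift d Q = {x. (\<lambda>j. if j < d then x j else 0) \<in> Q \<and> 0 \<le> x d \<and> x d \<le> 1 \<and> (\<forall>j>d. x j = 0)}"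

lemma lift_cube_of:
  assumes "N \<subseteq> {..<d}"
  shows "lift d (cube_of d l N) = cube_of (Suc d) (l(d:=0)) (insert d N)"
proof (rule set_eqI)
  fix x :: point
  show "x \<in> lift d (cube_of d l N) \<longleftrightarrow> x \<in> cube_of (Suc d) (l(d:=0)) (insert d N)"
    using assms unfolding lift_def cube_of_def
    apply (auto simp: less_Suc_eq)
    done
qed

lemma lift_inter: "lift d (Q \<inter> Q') = lift d Q \<inter> lift d Q'"
  unfolding lift_def by auto

lemma cube_of_zero: "x \<in> cube_of m l N \<Longrightarrow> j \<ge> m \<Longrightarrow> x j = 0"
  unfolding cube_of_def by auto

lemma lift_recover:
  assumes "\<And>x j. x \<in> Q \<Longrightarrow> j \<ge> d \<Longrightarrow> x j = 0"
  shows "Q = {y \<in> lift d Q. y d = 0}"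
proof (rule set_eqI)
  fix y :: point
  have A: "(\<lambda>j. if j < d then y j else 0) = y" if "y d = 0" "\<forall>j>d. y j = 0"
    using that by (intro ext) (metis linorder_neqE_nat)
  show "y \<in> Q \<longleftrightarrow> y \<in> {y \<in> lift d Q. y d = 0}"
  proof
    assume "y \<in> Q"
    with assms have "y d = 0" "\<forall>j>d. y j = 0" by auto
    with A `y \<in> Q` show "y \<in> {y \<in> lift d Q. y d = 0}" unfolding lift_def by auto
  next
    assume "y \<in> {y \<in> lift d Q. y d = 0}"
    with A show "y \<in> Q" unfolding lift_def by auto
  qed
qed

lemma elem_cube_lift:
  assumes "elem_cube d k S"
  shows "elem_cube (Suc d) (Suc k) (lift d S)"
proof -
  obtain l N where N: "N \<subseteq> {..<d}" "card N = k" "S = cube_of d l N"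
    using assms unfolding elem_cube_def by blast
  have "finite N" using N(1) finite_subset by blast
  moreover have "d \<notin> N" using N(1) by auto
  ultimately have "card (insert d N) = Suc k" using N(2) by simp
  moreover have "insert d N \<subseteq> {..<Suc d}" using N(1) by auto
  ultimately show ?thesis unfolding elem_cube_def using lift_cube_of[OF N(1)] N(3) by blast
qed

lemma elem_cube_zero: "elem_cube m k S \<Longrightarrow> x \<in> S \<Longrightarrow> j \<ge> m \<Longrightarrow> x j = 0"
  unfolding elem_cube_def using cube_of_zero by blast

lemma inj_lift: "inj_on (lift d) (faces d)"
proof (rule inj_onI)
  fix Q Q' assume "Q \<in> faces d" "Q' \<in> faces d" "lift d Q = lift d Q'"
  then show "Q = Q'"
    using lift_recover[of Q d] lift_recover[of Q' d] elem_cube_zero unfolding faces_def by auto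
qed

lemma lift_faces: "d \<ge> 1 \<Longrightarrow> Q \<in> faces d \<Longrightarrow> lift d Q \<in> faces (Suc d)"
  unfolding faces_def using elem_cube_lift[of d "d - 1" Q] by (simp add: Suc_diff_le)

lemma lift_adjacent: "d \<ge> 2 \<Longrightarrow> adjacent d Q Q' \<Longrightarrow> adjacent (Suc d) (lift d Q) (lift d Q')"
proof -
  assume "d \<ge> 2" "adjacent d Q Q'"
  moreover have "Suc (d - 2) = Suc d - 2" using `d \<ge> 2` by simp
  ultimately show ?thesis
    unfolding adjacent_def using elem_cube_lift[of d "d - 2" "Q \<inter> Q'"] by (simp add: lift_inter)
qed

lemma lift_Q0: "d \<ge> 1 \<Longrightarrow> lift d (Q0 d) = Q0 (Suc d)"
  unfolding Q0_def by (subst lift_cube_of) (auto intro!: arg_cong2[where f="cube_of (Suc d)"])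

lemma Q0_faces: "Q0 m \<in> faces m"
proof -
  have "elem_cube m (m-1) (Q0 m)" unfolding elem_cube_def Q0_def
    by (intro exI[of _ "\<lambda>_::nat. 0::int"] exI[of _ "{1..<m}"]) auto
  then show ?thesis by (simp add: faces_def)
qed

lemma pred_Bex_countable:
  fixes M :: "'a measure" and P :: "'a \<Rightarrow> 'b \<Rightarrow> bool"
  assumes "countable X" "\<And>i. i \<in> X \<Longrightarrow> Measurable.pred M (\<lambda>x. P x i)"
  shows "Measurable.pred M (\<lambda>x. \<exists>i\<in>X. P x i)"
proof -
  have s: "{x\<in>space M. P x i} \<in> sets M" if "i \<in> X" for i
    by (rule pred_def[THEN iffD1, OF assms(2)[OF that]])
  have "{x\<in>space M. \<exists>i\<in>X. P x i} \<in> sets M"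
    by (rule sets.sets_Collect_countable_Ex') (use assms(1) s in auto)
  then show ?thesis by (simp add: pred_def)
qed

fun walk :: "('a \<Rightarrow> 'a \<Rightarrow> bool) \<Rightarrow> 'a \<Rightarrow> 'a list \<Rightarrow> 'a \<Rightarrow> bool" where
  "walk R a [] b = (a = b)"
| "walk R a (c # cs) b = (R a c \<and> walk R c cs b)"

lemma rtranclp_walk: "R\<^sup>*\<^sup>* a b \<longleftrightarrow> (\<exists>cs. walk R a cs b)"
proof
  assume "R\<^sup>*\<^sup>* a b"
  then show "\<exists>cs. walk R a cs b"
  proof (induction rule: converse_rtranclp_induct)
    case base
    then show ?case by (rule exI[of _ "[]"]) simp
  next
    case (step y z)
    then obtain cs where "walk R z cs b" by blast
    with step show ?case by (intro exI[of _ "z # cs"]) simp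
  qed
next
  assume "\<exists>cs. walk R a cs b"
  then obtain cs where "walk R a cs b" by blast
  then show "R\<^sup>*\<^sup>* a b"
    by (induction cs arbitrary: a) (auto intro: converse_rtranclp_into_rtranclp)
qed

lemma walk_faces: "walk (open_adj m \<omega>) a cs b \<Longrightarrow> set cs \<subseteq> faces m"
  by (induction cs arbitrary: a) (auto simp: open_adj_def)

lemma cube_of_cong: "(\<And>j. j < m \<Longrightarrow> l j = l' j) \<Longrightarrow> cube_of m l N = cube_of m l' N"
  unfolding cube_of_def by simp

lemma countable_faces: "countable (faces m)"
proof -
  have sub: "faces m \<subseteq> (\<lambda>(xs, N). cube_of m (\<lambda>j. xs ! j) N) ` (UNIV \<times> Pow {..<m})"
  proof
    fix S assume "S \<in> faces m"
    then obtain l N where N: "N \<subseteq> {..<m}" "S = cube_of m l N"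
      unfolding faces_def elem_cube_def by blast
    have "cube_of m l N = cube_of m (\<lambda>j. map l [0..<m] ! j) N"
      by (rule cube_of_cong) simp
    then have "S = (\<lambda>(xs, N). cube_of m (\<lambda>j. xs ! j) N) (map l [0..<m], N)"
      using N(2) by simp
    moreover have "(map l [0..<m], N) \<in> UNIV \<times> Pow {..<m}" using N(1) by simp
    ultimately show "S \<in> (\<lambda>(xs, N). cube_of m (\<lambda>j. xs ! j) N) ` (UNIV \<times> Pow {..<m})"
      by (rule image_eqI)
  qed
  have c: "countable ((UNIV :: int list set) \<times> Pow {..<m})"
    by (rule countable_SIGMA) (simp_all add: countable_finite)
  show ?thesis
    by (rule countable_subset[OF sub countable_image[OF c]])
qed

lemma pred_component:
  assumes "Q \<in> faces m"
  shows "Measurable.pred (face_perc m p) (\<lambda>\<omega>. \<omega> Q)"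
proof -
  have "(\<lambda>\<omega>. \<omega> Q) \<in> face_perc m p \<rightarrow>\<^sub>M measure_pmf (bernoulli_pmf p)"
    unfolding face_perc_def using measurable_component_singleton[OF assms, of "\<lambda>_. measure_pmf (bernoulli_pmf p)"] by simp
  moreover have "measurable (face_perc m p) (measure_pmf (bernoulli_pmf p)) = measurable (face_perc m p) (count_space UNIV)"
    by (rule measurable_cong_sets) auto
  ultimately show ?thesis by simp
qed

lemma pred_open_adj: "Measurable.pred (face_perc m p) (\<lambda>\<omega>. open_adj m \<omega> a c)"
proof (cases "a \<in> faces m \<and> c \<in> faces m")
  case True
  have "Measurable.pred (face_perc m p) (\<lambda>\<omega>. \<omega> a \<and> \<omega> c)"
    using True pred_component[where Q=a and m=m and p=p] pred_component[where Q=c and m=m and p=p]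
    by (intro pred_intros_logic(3)) auto
  then show ?thesis using True unfolding open_adj_def
    by (cases "adjacent m a c") (simp_all add: measurable_const)
next
  case False
  then have "(\<lambda>\<omega>. open_adj m \<omega> a c) = (\<lambda>\<omega>. False)" unfolding open_adj_def by auto
  then show ?thesis by (simp add: measurable_const)
qed

lemma pred_walk: "Measurable.pred (face_perc m p) (\<lambda>\<omega>. walk (open_adj m \<omega>) a cs b)"
proof (induction cs arbitrary: a)
  case Nil
  then show ?case by (cases "a = b") (simp_all add: measurable_const)
next
  case (Cons c cs)
  then show ?case using pred_open_adj[where m=m and p=p and a=a and c=c]
    by (simp only: walk.simps) (rule pred_intros_logic(3))
qed

lemma infinite_iff_unbounded:
  assumes "countable F" "X \<subseteq> F"
  shows "infinite X \<longleftrightarrow> (\<forall>n. \<exists>x\<in>F. n \<le> to_nat_on F x \<and> x \<in> X)"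
proof -
  have inj: "inj_on (to_nat_on F) X"
    using inj_on_to_nat_on[OF assms(1)] assms(2) inj_on_subset by blast
  have "infinite X \<longleftrightarrow> infinite (to_nat_on F ` X)"
    using finite_imageD[OF _ inj] by auto
  also have "\<dots> \<longleftrightarrow> (\<forall>n. \<exists>k\<in>to_nat_on F ` X. n \<le> k)"
    by (metis finite_nat_set_iff_bounded_le not_less_eq_eq infinite_nat_iff_unbounded_le)
  also have "\<dots> \<longleftrightarrow> (\<forall>n. \<exists>x\<in>F. n \<le> to_nat_on F x \<and> x \<in> X)"
    using assms(2) by blast
  finally show ?thesis .
qed

lemma cluster_faces: "cluster m \<omega> Q \<subseteq> faces m"
  unfolding cluster_def by auto

lemma cluster_mem_iff:
  "Q' \<in> cluster m \<omega> Q \<longleftrightarrow> Q \<in> faces m \<and> Q' \<in> faces m \<and> \<omega> Q \<and> \<omega> Q' \<and>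
      (\<exists>cs\<in>lists (faces m). walk (open_adj m \<omega>) Q cs Q')"
  unfolding cluster_def rtranclp_walk using walk_faces by blast

lemma sets_inf_cluster:
  "{\<omega> \<in> space (face_perc m p). infinite (cluster m \<omega> (Q0 m))} \<in> sets (face_perc m p)"
proof -
  let ?F = "faces m"
  have cf: "countable ?F" by (rule countable_faces)
  have eq: "infinite (cluster m \<omega> (Q0 m)) \<longleftrightarrow> (\<forall>n. \<exists>Q\<in>?F. n \<le> to_nat_on ?F Q \<and>
      (Q0 m \<in> faces m \<and> Q \<in> faces m \<and> \<omega> (Q0 m) \<and> \<omega> Q \<and>
      (\<exists>cs\<in>lists (faces m). walk (open_adj m \<omega>) (Q0 m) cs Q)))" for \<omega>
    using infinite_iff_unbounded[OF cf cluster_faces] cluster_mem_iff by simp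
  have cl: "countable (lists ?F)" using cf by (rule countable_lists)
  let ?M = "face_perc m p"
  have w: "Measurable.pred ?M (\<lambda>\<omega>. \<exists>cs\<in>lists ?F. walk (open_adj m \<omega>) (Q0 m) cs Q)" for Q
    by (rule pred_Bex_countable[OF cl], rule pred_walk)
  have c: "Measurable.pred ?M (\<lambda>\<omega>. n \<le> to_nat_on ?F Q \<and>
      (Q0 m \<in> faces m \<and> Q \<in> faces m \<and> \<omega> (Q0 m) \<and> \<omega> Q \<and>
      (\<exists>cs\<in>lists (faces m). walk (open_adj m \<omega>) (Q0 m) cs Q)))" if Q: "Q \<in> ?F" for n Q
  proof (cases "n \<le> to_nat_on ?F Q")
    case True
    have "Measurable.pred ?M (\<lambda>\<omega>. \<omega> (Q0 m) \<and> \<omega> Q \<and>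
      (\<exists>cs\<in>lists (faces m). walk (open_adj m \<omega>) (Q0 m) cs Q))"
      by (rule pred_intros_logic(3), rule pred_component[OF Q0_faces], 
          rule pred_intros_logic(3), rule pred_component[OF Q], rule w)
    then show ?thesis using True Q Q0_faces[of m] by simp
  next
    case False
    then show ?thesis by simp
  qed
  have "Measurable.pred (face_perc m p) (\<lambda>\<omega>. \<forall>n::nat. \<exists>Q\<in>?F. n \<le> to_nat_on ?F Q \<and>
      (Q0 m \<in> faces m \<and> Q \<in> faces m \<and> \<omega> (Q0 m) \<and> \<omega> Q \<and>
      (\<exists>cs\<in>lists (faces m). walk (open_adj m \<omega>) (Q0 m) cs Q)))"
    by (rule pred_intros_countable(1), rule pred_Bex_countable[OF cf], rule c)
  then show ?thesis unfolding eq[symmetric] pred_def .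
qed

lemma prob_space_face_perc: "prob_space (face_perc m p)"
  unfolding face_perc_def by (rule prob_space_PiM) (simp add: prob_space_measure_pmf)

lemma open_adj_lift:
  assumes d: "d \<ge> 2" and "open_adj d (\<lambda>Q\<in>faces d. \<omega> (lift d Q)) a b"
  shows "open_adj (Suc d) \<omega> (lift d a) (lift d b)"
  using assms lift_faces[of d a] lift_faces[of d b] lift_adjacent[OF d, of a b]
  unfolding open_adj_def by auto

lemma rtranclp_lift:
  assumes d: "d \<ge> 2" and "(open_adj d (\<lambda>Q\<in>faces d. \<omega> (lift d Q)))\<^sup>*\<^sup>* a b"
  shows "(open_adj (Suc d) \<omega>)\<^sup>*\<^sup>* (lift d a) (lift d b)"
  using assms(2)
proof (induction rule: rtranclp_induct)
  case base
  then show ?case by simp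
next
  case (step y z)
  then show ?case using open_adj_lift[OF d step(2)] by (simp add: rtranclp.rtrancl_into_rtrancl)
qed

lemma cluster_lift:
  assumes d: "d \<ge> 2"
  shows "lift d ` cluster d (\<lambda>Q\<in>faces d. \<omega> (lift d Q)) (Q0 d) \<subseteq> cluster (Suc d) \<omega> (Q0 (Suc d))"
proof
  fix Q' assume "Q' \<in> lift d ` cluster d (\<lambda>Q\<in>faces d. \<omega> (lift d Q)) (Q0 d)"
  then obtain Q where Q: "Q' = lift d Q" "Q \<in> cluster d (\<lambda>Q\<in>faces d. \<omega> (lift d Q)) (Q0 d)"
    by blast
  have d1: "d \<ge> 1" using d by simp
  from Q(2) have "Q0 d \<in> faces d" "Q \<in> faces d" "\<omega> (lift d (Q0 d))" "\<omega> (lift d Q)"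
    "(open_adj d (\<lambda>Q\<in>faces d. \<omega> (lift d Q)))\<^sup>*\<^sup>* (Q0 d) Q"
    unfolding cluster_def by auto
  moreover have "(open_adj (Suc d) \<omega>)\<^sup>*\<^sup>* (lift d (Q0 d)) (lift d Q)"
    by (rule rtranclp_lift[OF d]) fact
  ultimately show "Q' \<in> cluster (Suc d) \<omega> (Q0 (Suc d))"
    using Q(1) lift_faces[OF d1] lift_Q0[OF d1] Q0_faces[of "Suc d"]
    unfolding cluster_def by auto
qed


lemma meas_lift:
  assumes d1: "d \<ge> 1"
  shows "(\<lambda>\<omega>. \<lambda>Q\<in>faces d. \<omega> (lift d Q)) \<in> measurable (Pi\<^sub>M (faces (Suc d)) (\<lambda>_. measure_pmf (bernoulli_pmf p))) (Pi\<^sub>M (faces d) (\<lambda>_. measure_pmf (bernoulli_pmf p)))"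
proof (rule measurable_restrict)
  fix i assume "i \<in> faces d"
  then have "lift d i \<in> faces (Suc d)" by (rule lift_faces[OF d1])
  then show "(\<lambda>\<omega>. \<omega> (lift d i)) \<in> measurable (Pi\<^sub>M (faces (Suc d)) (\<lambda>_. measure_pmf (bernoulli_pmf p))) (measure_pmf (bernoulli_pmf p))"
    by (rule measurable_component_singleton)
qed

lemma distr_lift:
  assumes d1: "d \<ge> 1"
  shows "distr (Pi\<^sub>M (faces (Suc d)) (\<lambda>_. measure_pmf (bernoulli_pmf p))) (Pi\<^sub>M (faces d) (\<lambda>_. measure_pmf (bernoulli_pmf p)))
     (\<lambda>\<omega>. \<lambda>Q\<in>faces d. \<omega> (lift d Q)) = Pi\<^sub>M (faces d) (\<lambda>_. measure_pmf (bernoulli_pmf p))"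
proof -
  have fs: "lift d \<in> faces d \<rightarrow> faces (Suc d)" using lift_faces[OF d1] by blast
  note r = distr_PiM_reindex[where M="\<lambda>_. measure_pmf (bernoulli_pmf p)" and f="lift d" and K="faces (Suc d)" and I="faces d"]
  show ?thesis
    by (rule r, rule prob_space_measure_pmf, rule inj_lift, rule fs)
qed


lemma theta_mono:
  assumes d: "d \<ge> 2"
  shows "theta_face d p \<le> theta_face (Suc d) p"
proof -
  let ?B = "measure_pmf (bernoulli_pmf p)"
  let ?M1 = "face_perc (Suc d) p" and ?M = "face_perc d p"
  let ?\<pi> = "\<lambda>\<omega>. \<lambda>Q\<in>faces d. \<omega> (lift d Q)"
  have d1: "d \<ge> 1" using d by simp
  have distr: "distr ?M1 ?M ?\<pi> = ?M"
    unfolding face_perc_def by (rule distr_lift[OF d1])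
  have meas: "?\<pi> \<in> measurable ?M1 ?M"
    unfolding face_perc_def by (rule meas_lift[OF d1])
  let ?A = "{\<omega> \<in> space ?M. infinite (cluster d \<omega> (Q0 d))}"
  let ?A1 = "{\<omega> \<in> space ?M1. infinite (cluster (Suc d) \<omega> (Q0 (Suc d)))}"
  have "theta_face d p = measure (distr ?M1 ?M ?\<pi>) ?A"
    unfolding theta_face_def distr ..
  also have "\<dots> = measure ?M1 (?\<pi> -` ?A \<inter> space ?M1)"
    by (rule measure_distr[OF meas sets_inf_cluster])
  also have "\<dots> \<le> measure ?M1 ?A1"
  proof -
    interpret M1: prob_space ?M1 by (rule prob_space_face_perc)
    have sub: "?\<pi> -` ?A \<inter> space ?M1 \<subseteq> ?A1"
    proof
      fix \<omega> assume w: "\<omega> \<in> ?\<pi> -` ?A \<inter> space ?M1"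
      then have sp: "\<omega> \<in> space ?M1" by (rule IntD2)
      from w have "\<omega> \<in> ?\<pi> -` ?A" by (rule IntD1)
      then have "?\<pi> \<omega> \<in> ?A" by (simp only: vimage_eq)
      then have inf: "infinite (cluster d (?\<pi> \<omega>) (Q0 d))" by simp
      have inj: "inj_on (lift d) (cluster d (?\<pi> \<omega>) (Q0 d))"
        by (rule inj_on_subset[OF inj_lift cluster_faces])
      have i1: "finite (lift d ` cluster d (?\<pi> \<omega>) (Q0 d)) \<Longrightarrow> finite (cluster d (?\<pi> \<omega>) (Q0 d))"
        by (rule finite_imageD[OF _ inj])
      have i2: "finite (cluster (Suc d) \<omega> (Q0 (Suc d))) \<Longrightarrow> finite (lift d ` cluster d (?\<pi> \<omega>) (Q0 d))"
        by (rule finite_subset[OF cluster_lift[OF d]])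
      from inf i1 i2 have "infinite (cluster (Suc d) \<omega> (Q0 (Suc d)))" by blast
      with sp show "\<omega> \<in> ?A1" by (intro CollectI conjI)
    qed
    show ?thesis by (rule M1.finite_measure_mono[OF sub sets_inf_cluster])
  qed
  also have "\<dots> = theta_face (Suc d) p"
    unfolding theta_face_def ..
  finally show ?thesis .
qed



definition chainC :: "nat \<Rightarrow> nat \<Rightarrow> cube" where
  "chainC d k = cube_of d (\<lambda>j. if j = 1 then int k else 0) {1..<d}"

lemma chain_faces: "chainC d k \<in> faces d"
proof -
  have "elem_cube d (d-1) (chainC d k)" unfolding elem_cube_def chainC_def
    by (intro exI[of _ "\<lambda>j::nat. if j = 1 then int k else 0"] exI[of _ "{1..<d}"]) auto
  then show ?thesis by (simp add: faces_def)
qed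

lemma chain0: "chainC d 0 = Q0 d"
  unfolding chainC_def Q0_def by (rule cube_of_cong) simp

lemma chain_inter:
  assumes "d \<ge> 2"
  shows "chainC d k \<inter> chainC d (Suc k) = cube_of d (\<lambda>j. if j = 1 then int k + 1 else 0) {2..<d}"
proof (rule set_eqI)
  fix x :: point
  show "x \<in> chainC d k \<inter> chainC d (Suc k) \<longleftrightarrow> x \<in> cube_of d (\<lambda>j. if j = 1 then int k + 1 else 0) {2..<d}"
    unfolding chainC_def cube_of_def
  proof (intro iffI; elim IntE CollectE conjE; intro IntI CollectI conjI allI impI)
    fix j assume j: "j < d"
      and h1: "\<forall>j<d. real_of_int (if j = 1 then int k else 0) \<le> x j \<and>
              x j \<le> real_of_int (if j = 1 then int k else 0) + (if j \<in> {1..<d} then 1 else 0)"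
      and h2: "\<forall>j<d. real_of_int (if j = 1 then int (Suc k) else 0) \<le> x j \<and>
              x j \<le> real_of_int (if j = 1 then int (Suc k) else 0) + (if j \<in> {1..<d} then 1 else 0)"
    from h1 h2 j show "real_of_int (if j = 1 then int k + 1 else 0) \<le> x j"
      by (cases "j = 1") auto
    from h1 h2 j show "x j \<le> real_of_int (if j = 1 then int k + 1 else 0) + (if j \<in> {2..<d} then 1 else 0)"
      by (cases "j = 0"; cases "j = 1") auto
  next
    fix j assume "\<forall>j\<ge>d. x j = 0" "d \<le> j"
    then show "x j = 0" by simp
  next
    fix j assume j: "j < d"
      and h: "\<forall>j<d. real_of_int (if j = 1 then int k + 1 else 0) \<le> x j \<and>
              x j \<le> real_of_int (if j = 1 then int k + 1 else 0) + (if j \<in> {2..<d} then 1 else 0)"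
    from h j show "real_of_int (if j = 1 then int k else 0) \<le> x j"
      by (cases "j = 1") auto
    from h j show "x j \<le> real_of_int (if j = 1 then int k else 0) + (if j \<in> {1..<d} then 1 else 0)"
      by (cases "j = 0"; cases "j = 1") auto
    from h j show "real_of_int (if j = 1 then int (Suc k) else 0) \<le> x j"
      by (cases "j = 0"; cases "j = 1") auto
    from h j show "x j \<le> real_of_int (if j = 1 then int (Suc k) else 0) + (if j \<in> {1..<d} then 1 else 0)"
      by (cases "j = 0"; cases "j = 1") auto
  next
    fix j assume "\<forall>j\<ge>d. x j = 0" "d \<le> j"
    then show "x j = 0" by simp
  next
    fix j assume "\<forall>j\<ge>d. x j = 0" "d \<le> j"
    then show "x j = 0" by simp
  qed
qed

lemma chain_adj:
  assumes "d \<ge> 2"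
  shows "adjacent d (chainC d k) (chainC d (Suc k))"
proof -
  have "elem_cube d (d-2) (cube_of d (\<lambda>j. if j = 1 then int k + 1 else 0) {2..<d})"
    unfolding elem_cube_def
    by (intro exI[of _ "\<lambda>j::nat. if j = 1 then int k + 1 else 0"] exI[of _ "{2..<d}"]) auto
  then show ?thesis unfolding adjacent_def chain_inter[OF assms] .
qed

lemma chain_pt:
  assumes "d \<ge> 2"
  shows "(\<lambda>j. if j = 1 then real k else 0) \<in> chainC d k"
  using assms unfolding chainC_def cube_of_def by auto

lemma chain_pt_le:
  assumes "d \<ge> 2" "(\<lambda>j. if j = 1 then real k else 0) \<in> chainC d k'"
  shows "k' \<le> k"
proof -
  have "1 < d" using assms(1) by simp
  with assms(2) have "real_of_int (int k') \<le> real k"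
    unfolding chainC_def cube_of_def by (auto dest!: spec[of _ 1])
  then show ?thesis by simp
qed

lemma chain_inj:
  assumes "d \<ge> 2"
  shows "inj (chainC d)"
proof (rule injI)
  fix k k' assume e: "chainC d k = chainC d k'"
  have "k' \<le> k" using chain_pt_le[OF assms] chain_pt[OF assms, of k] e by simp
  moreover have "k \<le> k'" using chain_pt_le[OF assms] chain_pt[OF assms, of k'] e by simp
  ultimately show "k = k'" by simp
qed

lemma all_open_infinite:
  assumes d: "d \<ge> 2" and op: "\<forall>Q\<in>faces d. \<omega> Q"
  shows "infinite (cluster d \<omega> (Q0 d))"
proof -
  have r: "(open_adj d \<omega>)\<^sup>*\<^sup>* (chainC d 0) (chainC d k)" for k
  proof (induction k)
    case 0
    then show ?case by simp
  next
    case (Suc k)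
    have "open_adj d \<omega> (chainC d k) (chainC d (Suc k))"
      unfolding open_adj_def using chain_faces op chain_adj[OF d] by blast
    with Suc show ?case by (rule rtranclp.rtrancl_into_rtrancl)
  qed
  have "range (chainC d) \<subseteq> cluster d \<omega> (Q0 d)"
  proof
    fix Q assume "Q \<in> range (chainC d)"
    then obtain k where k: "Q = chainC d k" by blast
    show "Q \<in> cluster d \<omega> (Q0 d)"
      unfolding cluster_def using k r[of k] chain0[of d] Q0_faces[of d] chain_faces[of d k] op
      by auto
  qed
  moreover have "infinite (range (chainC d))" by (rule range_inj_infinite[OF chain_inj[OF d]])
  ultimately show ?thesis using infinite_super by blast
qed

lemma theta_one:
  assumes d: "d \<ge> 2"
  shows "theta_face d 1 = 1"
proof -
  let ?B = "measure_pmf (bernoulli_pmf 1)"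
  interpret P: product_prob_space "\<lambda>_. ?B" "faces d"
    by (rule product_prob_spaceI) (rule prob_space_measure_pmf)
  interpret M: prob_space "face_perc d 1" by (rule prob_space_face_perc)
  have b: "AE b in ?B. b"
  proof (subst AE_measure_pmf_iff, intro ballI)
    fix y assume "y \<in> set_pmf (bernoulli_pmf 1)"
    then have "pmf (bernoulli_pmf 1) y \<noteq> 0" by (simp add: set_pmf_iff)
    then show y using pmf_bernoulli_False[of 1] by (cases y) auto
  qed
  have "\<forall>Q\<in>faces d. AE \<omega> in face_perc d 1. \<omega> Q"
  proof
    fix Q assume "Q \<in> faces d"
    then show "AE \<omega> in face_perc d 1. \<omega> Q"
      unfolding face_perc_def by (rule P.AE_component[OF _ b])
  qed
  then have "AE \<omega> in face_perc d 1. \<forall>Q\<in>faces d. \<omega> Q"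
    by (subst AE_ball_countable[OF countable_faces])
  then have "AE \<omega> in face_perc d 1. infinite (cluster d \<omega> (Q0 d))"
    by (rule eventually_mono) (rule all_open_infinite[OF d])
  then show ?thesis
    unfolding theta_face_def using M.prob_Collect_eq_1[OF sets_inf_cluster] by simp
qed

theorem proposition2p10:
  fixes d :: nat
  assumes "d \<ge> 2"
  shows "pc_face (d + 1) \<le> pc_face d"
proof -
  let ?S = "\<lambda>m. {p. 0 \<le> p \<and> p \<le> 1 \<and> theta_face m p > 0}"
  have "1 \<in> ?S d" using theta_one[OF assms] by simp
  then have ne: "?S d \<noteq> {}" by blast
  have bdd: "bdd_below (?S (d + 1))" by (rule bdd_belowI[of _ 0]) simp
  have sub: "?S d \<subseteq> ?S (d + 1)"
  proof
    fix p assume "p \<in> ?S d"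
    moreover have "theta_face d p \<le> theta_face (Suc d) p" by (rule theta_mono[OF assms])
    ultimately show "p \<in> ?S (d + 1)" by simp
  qed
  show ?thesis unfolding pc_face_def by (rule cInf_superset_mono[OF ne bdd sub])
qed


end
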